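(* Let $r\ge1$ be an integer, $\beta>0$, and let $Q$ be a complex polynomial of degree $r$ with $Q(0)=0$. Define polynomials $\widehat P_n(x)$, $n\ge0$, by $$\sum_{n=0}^\infty\frac{\widehat P_n(x)}{n!(\beta)_n}z^n=e^{Q(z)}\,{}_1F_1\left(\begin{matrix}-x\\ \beta\end{matrix};-z\right),$$ and let $\sigma$ be the operator $\sigma=x\,\partial^2T_-+\beta\,\partial$, where $\partial f(x)=f(x+1)-f(x)$ and $T_-f(x)=f(x-1)$; that is, $\sigma f(x)=(x+\beta)f(x+1)-(2x+\beta)f(x)+xf(x-1)$. Then for all $n\ge1$, $$\sigma\widehat P_n(x)=n(n+\beta-1)\,\widehat P_{n-1}(x).$$
   Context: $(a)_n=a(a+1)\cdots(a+n-1)$, $(a)_0=1$; ${}_1F_1\left(\begin{matrix}a\\ b\end{matrix};x\right)=\sum_{m\ge0}\frac{(a)_m}{(b)_m}\frac{x^m}{m!}$. *)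

theory Defs
  imports Complex_Main "HOL-Computational_Algebra.Computational_Algebra"
begin

definition hyp1F1_fps :: "complex \<Rightarrow> complex \<Rightarrow> complex fps" where
  "hyp1F1_fps a b = Abs_fps (\<lambda>m. pochhammer a m / pochhammer b m / fact m)"

definition sigma_op :: "real \<Rightarrow> (complex \<Rightarrow> complex) \<Rightarrow> complex \<Rightarrow> complex" where
  "sigma_op \<beta> f x = (x + of_real \<beta>) * f (x + 1) - (2 * x + of_real \<beta>) * f x + x * f (x - 1)"

end

theory Submission
  imports Defs
begin

definition ff :: "nat \<Rightarrow> complex \<Rightarrow> complex" where
  "ff k y = (-1)^k * pochhammer (-y) k"

lemma ff_Suc1: "ff (Suc k) y = y * ff k (y - 1)"
  unfolding ff_def pochhammer_rec by (simp add: algebra_simps)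

lemma ff_Suc2: "ff (Suc k) y = ff k y * (y - of_nat k)"
  unfolding ff_def pochhammer_rec' by (simp add: algebra_simps)

lemma sigma_ff_Suc:
  "sigma_op \<beta> (ff (Suc k)) x = of_nat (Suc k) * (of_nat k + of_real \<beta>) * ff k x"
proof -
  have a: "ff (Suc k) (x + 1) = (x + 1) * ff k x" using ff_Suc1[of k "x+1"] by simp
  have b: "ff (Suc k) x = ff k x * (x - of_nat k)" by (rule ff_Suc2)
  have c: "x * ff k (x - 1) = (x - of_nat k) * ff k x"
    using ff_Suc1[of k x] ff_Suc2[of k x] by (simp add: algebra_simps)
  have d: "ff (Suc k) (x - 1) = ff k (x - 1) * (x - 1 - of_nat k)" by (rule ff_Suc2)
  have "sigma_op \<beta> (ff (Suc k)) x = (x + of_real \<beta>) * (x + 1) * ff k x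
      - (2 * x + of_real \<beta>) * (x - of_nat k) * ff k x + (x * ff k (x - 1)) * (x - 1 - of_nat k)"
    unfolding sigma_op_def a b d by (simp add: algebra_simps)
  also have "\<dots> = of_nat (Suc k) * (of_nat k + of_real \<beta>) * ff k x"
    unfolding c by (simp add: algebra_simps)
  finally show ?thesis .
qed

lemma sigma_ff_0: "sigma_op \<beta> (ff 0) x = 0"
  unfolding sigma_op_def ff_def by (simp add: algebra_simps)

lemma sigma_sum:
  "sigma_op \<beta> (\<lambda>y. \<Sum>i\<in>S. a i * f i y) x = (\<Sum>i\<in>S. a i * sigma_op \<beta> (f i) x)"
  unfolding sigma_op_def
  by (simp add: sum_distrib_left sum_subtractf[symmetric] sum.distrib[symmetric] algebra_simps)

lemma sigma_scale:
  "sigma_op \<beta> (\<lambda>y. c * g y) x = c * sigma_op \<beta> g x"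
  unfolding sigma_op_def by (simp add: algebra_simps)

theorem mainTheorem4:
  fixes r :: nat and \<beta> :: real and Q :: "complex poly" and P :: "nat \<Rightarrow> complex \<Rightarrow> complex"
  assumes "r \<ge> 1" and "\<beta> > 0" and "degree Q = r" and "poly Q 0 = 0"
    and "\<And>x. Abs_fps (\<lambda>n. P n x / (fact n * pochhammer (of_real \<beta>) n))
               = (fps_exp 1 oo fps_of_poly Q) * fps_compose (hyp1F1_fps (- x) (of_real \<beta>)) (- fps_X)"
    and "n \<ge> 1"
  shows "sigma_op \<beta> (P n) x = of_nat n * (of_nat n + of_real \<beta> - 1) * P (n - 1) x"
proof -
  define e where "e = fps_nth (fps_exp 1 oo fps_of_poly Q)"
  define B where "B = (of_real \<beta> :: complex)"
  define A where "A = (\<lambda>n. fact n * pochhammer B n :: complex)"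
  define c where "c = (\<lambda>m y. ff m y / (pochhammer B m * fact m))"
  have pne: "pochhammer B m \<noteq> 0" for m
    unfolding B_def pochhammer_eq_0_iff
  proof
    assume "\<exists>k<m. of_real \<beta> = - (of_nat k :: complex)"
    then obtain k where "of_real \<beta> = (of_real (- real k) :: complex)" by auto
    hence "\<beta> = - real k" by (simp only: of_real_eq_iff)
    thus False using assms(2) by simp
  qed
  have Ane: "A m \<noteq> 0" for m unfolding A_def using pne by simp
  have Pform: "P m y = A m * (\<Sum>i=0..m. e i * c (m - i) y)" for m y
  proof -
    have "fps_nth (Abs_fps (\<lambda>n. P n y / (fact n * pochhammer (of_real \<beta>) n))) m
       = fps_nth ((fps_exp 1 oo fps_of_poly Q) * fps_compose (hyp1F1_fps (- y) (of_real \<beta>)) (- fps_X)) m"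
      using assms(5) by simp
    hence "P m y / A m = (\<Sum>i=0..m. e i * c (m - i) y)"
      unfolding fps_mult_nth fps_compose_uminus' hyp1F1_fps_def A_def B_def e_def c_def ff_def
      by (simp add: algebra_simps)
    thus ?thesis using Ane[of m] by (simp add: field_simps)
  qed
  have sc: "sigma_op \<beta> (c (Suc k)) x = c k x" for k
  proof -
    have "sigma_op \<beta> (c (Suc k)) x = sigma_op \<beta> (ff (Suc k)) x / (pochhammer B (Suc k) * fact (Suc k))"
      unfolding c_def using sigma_scale[of \<beta> "1 / (pochhammer B (Suc k) * fact (Suc k))" "ff (Suc k)" x]
      by simp
    also have "\<dots> = c k x"
    proof -
      have nz: "of_nat k + B \<noteq> 0"
      proof
        assume "of_nat k + B = 0"
        hence "of_real (real k + \<beta>) = (of_real 0 :: complex)" by (simp add: B_def)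
        hence "real k + \<beta> = 0" by (simp only: of_real_eq_iff)
        thus False using assms(2) by simp
      qed
      have f: "(fact k :: complex) \<noteq> 0" by simp
      show ?thesis
      proof -
        have D: "pochhammer B (Suc k) * fact (Suc k) = (of_nat (Suc k) * (of_nat k + B)) * (pochhammer B k * fact k)"
          unfolding pochhammer_rec' fact_Suc by (simp add: algebra_simps)
        have a: "of_nat (Suc k) * (of_nat k + B) \<noteq> (0::complex)" using nz of_nat_neq_0[of k, where ?'a=complex] by (simp del: of_nat_Suc)
        show ?thesis
          unfolding sigma_ff_Suc c_def B_def[symmetric] D
          using nonzero_mult_divide_mult_cancel_left[OF a, of "ff k x"] by simp
      qed
    qed
    finally show ?thesis .
  qed
  have sc0: "sigma_op \<beta> (c 0) x = 0"
    unfolding c_def using sigma_ff_0[of \<beta> x] sigma_scale[of \<beta> 1 "ff 0" x] by simp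
  obtain k where k: "n = Suc k" using assms(6) by (cases n) auto
  have "sigma_op \<beta> (P n) x = A n * (\<Sum>i=0..n. e i * sigma_op \<beta> (c (n - i)) x)"
    unfolding Pform using sigma_scale[of \<beta> "A n" "\<lambda>y. \<Sum>i=0..n. e i * c (n - i) y" x]
      sigma_sum[of \<beta> e "\<lambda>i. c (n - i)" "{0..n}" x] by simp
  also have "(\<Sum>i=0..n. e i * sigma_op \<beta> (c (n - i)) x) = (\<Sum>i=0..k. e i * c (k - i) x)"
  proof -
    have "(\<Sum>i=0..n. e i * sigma_op \<beta> (c (n - i)) x) = (\<Sum>i=0..k. e i * sigma_op \<beta> (c (n - i)) x)"
      using k sc0 by simp
    also have "\<dots> = (\<Sum>i=0..k. e i * c (k - i) x)"
      by (rule sum.cong) (auto simp: k Suc_diff_le sc)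
    finally show ?thesis .
  qed
  also have "A n = of_nat n * (of_nat n + B - 1) * A k"
    unfolding A_def k pochhammer_rec' by (simp add: algebra_simps)
  finally show ?thesis using Pform[of k x] k B_def by (simp add: algebra_simps)
qed

end
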